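(* Let $\mathcal X$, $\mathcal Y$, $\mathcal Z$ be finite sets ($\mathcal Y$ the set of collections of intermediate outputs, $\mathcal Z$ the set of final outputs), let $\mathcal S=\mathcal Y\times\mathcal Z$, and write $s=(y,z)\in\mathcal S$. Let $r^*:\mathcal X\times\mathcal Z\to\mathbb R$, $\beta>0$, and let $\mathbb P(z\succ z'\mid x)=\frac{e^{r^*(x,z)}}{e^{r^*(x,z)}+e^{r^*(x,z')}}$ be the Bradley–Terry preference oracle on final outputs. Define the system preference oracle $\mathbb P_{\mathrm{sys}}(s^w\succ s^l\mid x):=\mathbb P(z^w\succ z^l\mid x)$ for $s^w=(y^w,z^w)$, $s^l=(y^l,z^l)$. Let the compound system be a family $\{p_\theta(\cdot\mid x):\theta\in\Theta\}$ of joint conditional distributions on $\mathcal S$, and assume this family contains every conditional distribution on $\mathcal S$ that is strictly positive. Let the reference $p_{\bar\theta}(\cdot\mid x)$ be uniform on $\mathcal S$ for every $x$. Let $\mathcal D$ be the preference distribution obtained by drawing $(x,s,s')$ from a distribution $\mathcal D'$ on $\mathcal X\times\mathcal S\times\mathcal S$ that gives positive probability to every triple (in particular every $s\in\mathcal Y\times\mathcal Z$ is sampled with positive probability), and setting $(s^w,s^l)=(s,s')$ with probability $\mathbb P_{\mathrm{sys}}(s\succ s'\mid x)$ and $(s^w,s^l)=(s',s)$ otherwise. Suppose $\theta^*_{\mathrm{sys}}\in\Theta$ minimizes the SysDPO loss $$L_{\mathrm{Direct}}(\theta)=-\mathbb E_{(x,s^w,s^l)\sim\mathcal D}\Big[\log\sigma\Big(\beta\log\tfrac{p_\theta(s^w\mid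 x)}{p_{\bar\theta}(s^w\mid x)}-\beta\log\tfrac{p_\theta(s^l\mid x)}{p_{\bar\theta}(s^l\mid x)}\Big)\Big],$$ with $\sigma$ the sigmoid. Then the marginal model on final outputs, $p_{\theta^*_{\mathrm{sys}}}(z\mid x)=\sum_{y\in\mathcal Y}p_{\theta^*_{\mathrm{sys}}}(y,z\mid x)$, is $\beta$-perfectly aligned with $\mathbb P$, i.e. for all $x\in\mathcal X$ and $z^w,z^l\in\mathcal Z$, $$\mathbb P(z^w\succ z^l\mid x)=\frac{p_{\theta^*_{\mathrm{sys}}}(z^w\mid x)^\beta}{p_{\theta^*_{\mathrm{sys}}}(z^w\mid x)^\beta+p_{\theta^*_{\mathrm{sys}}}(z^l\mid x)^\beta}.$$
   Context: A generative model $\theta^*$ with conditional distribution $p_{\theta^*}(\cdot\mid x)$ on $\mathcal Z$ is called $\beta$-perfectly aligned (for $\beta>0$) with a preference oracle $\mathbb P(\cdot\succ\cdot\mid x)$ if for all $x\in\mathcal X$ and $z^w,z^l\in\mathcal Z$, $\frac{\mathbb P(z^w\succ z^l\mid x)}{\mathbb P(z^l\succ z^w\mid x)}=\Big(\frac{p_{\theta^*}(z^w\mid x)}{p_{\theta^*}(z^l\mid x)}\Big)^\beta$, equivalently $\mathbb P(z^w\succ z^l\mid x)=\frac{p_{\theta^*}(z^w\mid x)^\beta}{p_{\theta^*}(z^w\mid x)^\beta+p_{\theta^*}(z^l\mid x)^\beta}$. *)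

theory Defs
  imports Complex_Main "HOL-Library.Extended_Real"
begin

definition sigmoid :: "real \<Rightarrow> real" where
  "sigmoid t = 1 / (1 + exp (- t))"

definition BT :: "('x \<Rightarrow> 'z \<Rightarrow> real) \<Rightarrow> 'x \<Rightarrow> 'z \<Rightarrow> 'z \<Rightarrow> real" where
  "BT r x z z' = exp (r x z) / (exp (r x z) + exp (r x z'))"

definition Psys :: "('x \<Rightarrow> 'z \<Rightarrow> real) \<Rightarrow> 'x \<Rightarrow> 'y \<times> 'z \<Rightarrow> 'y \<times> 'z \<Rightarrow> real" where
  "Psys r x s s' = BT r x (snd s) (snd s')"

definition cond_dist :: "('x \<Rightarrow> 's::finite \<Rightarrow> real) \<Rightarrow> bool" where
  "cond_dist q \<longleftrightarrow> (\<forall>x s. 0 \<le> q x s) \<and> (\<forall>x. (\<Sum>s\<in>UNIV. q x s) = 1)"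

definition uniform_ref :: "'x \<Rightarrow> ('y::finite \<times> 'z::finite) \<Rightarrow> real" where
  "uniform_ref x s = 1 / real (card (UNIV :: ('y \<times> 'z) set))"

definition dpo_term :: "real \<Rightarrow> ('x \<Rightarrow> 'y::finite \<times> 'z::finite \<Rightarrow> real) \<Rightarrow> 'x
     \<Rightarrow> 'y \<times> 'z \<Rightarrow> 'y \<times> 'z \<Rightarrow> real" where
  "dpo_term \<beta> q x sw sl =
     - ln (sigmoid (\<beta> * ln (q x sw / uniform_ref x sw) - \<beta> * ln (q x sl / uniform_ref x sl)))"

text \<open>Value in ereal: if the model assigns probability 0 to some
  s, the loss is +infinity (the true value of -log sigma(-infinity) under positive sampling).\<close>
definition L_direct :: "real \<Rightarrow> ('x::finite \<Rightarrow> 'z::finite \<Rightarrow> real)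
     \<Rightarrow> ('x \<Rightarrow> 'y::finite \<times> 'z \<Rightarrow> 'y \<times> 'z \<Rightarrow> real)
     \<Rightarrow> ('x \<Rightarrow> 'y \<times> 'z \<Rightarrow> real) \<Rightarrow> ereal" where
  "L_direct \<beta> r d q =
     (if (\<forall>x s. 0 < q x s) then
        ereal (\<Sum>x\<in>UNIV. \<Sum>s\<in>UNIV. \<Sum>s'\<in>UNIV. d x s s' *
           (Psys r x s s' * dpo_term \<beta> q x s s' + (1 - Psys r x s s') * dpo_term \<beta> q x s' s))
      else \<infinity>)"

definition marginal :: "('x \<Rightarrow> 'y::finite \<times> 'z \<Rightarrow> real) \<Rightarrow> 'x \<Rightarrow> 'z \<Rightarrow> real" where
  "marginal q x z = (\<Sum>y\<in>UNIV. q x (y, z))"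

end

theory Submission
  imports Defs
begin

definition Tm :: "real \<Rightarrow> real \<Rightarrow> real" where
  "Tm P t = P * (- ln t) + (1 - P) * (- ln (1 - t))"

lemma gibbs_le:
  assumes "0 < P" "P < 1" "0 < t" "t < 1"
  shows "Tm P P \<le> Tm P t"
proof -
  have a: "ln t - ln P \<le> (t - P) / P" using ln_diff_le assms by auto
  have b: "ln (1-t) - ln (1-P) \<le> ((1-t) - (1-P)) / (1-P)" using ln_diff_le[of "1-t" "1-P"] assms by linarith
  have a': "P * (ln t - ln P) \<le> t - P" using mult_left_mono[OF a, of P] assms by simp
  have b': "(1-P) * (ln (1-t) - ln (1-P)) \<le> P - t" using mult_left_mono[OF b, of "1-P"] assms by simp
  show ?thesis using a' b' unfolding Tm_def by (simp add: algebra_simps)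
qed

lemma gibbs_eq:
  assumes "0 < P" "P < 1" "0 < t" "t < 1" "Tm P t \<le> Tm P P"
  shows "t = P"
proof (rule ccontr)
  assume ne: "t \<noteq> P"
  have a: "ln t - ln P < (t - P) / P" using ln_diff_less assms ne by auto
  have b: "ln (1-t) - ln (1-P) \<le> ((1-t) - (1-P)) / (1-P)" using ln_diff_le[of "1-t" "1-P"] assms by linarith
  have a': "P * (ln t - ln P) < t - P" using mult_strict_left_mono[OF a, of P] assms by simp
  have b': "(1-P) * (ln (1-t) - ln (1-P)) \<le> P - t" using mult_left_mono[OF b, of "1-P"] assms by simp
  have "Tm P P < Tm P t" using a' b' unfolding Tm_def by (simp add: algebra_simps)
  then show False using assms(5) by simp
qed

lemma sigmoid_bounds: "0 < sigmoid u" "sigmoid u < 1"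
proof -
  have g: "\<And>e::real. 0 < e \<Longrightarrow> 0 < 1 / (1 + e) \<and> 1 / (1 + e) < 1" by (simp add: field_simps)
  show "0 < sigmoid u" "sigmoid u < 1" unfolding sigmoid_def using g[OF exp_gt_zero[of "- u"]] by auto
qed

lemma sigmoid_neg: "sigmoid (- u) = 1 - sigmoid u"
  proof -
  have g: "\<And>e::real. 0 < e \<Longrightarrow> 1 / (1 + inverse e) = 1 - 1 / (1 + e)" by (simp add: field_simps)
  show ?thesis unfolding sigmoid_def using g[OF exp_gt_zero[of u]] by (simp add: exp_minus)
qed

lemma sigmoid_inj: "sigmoid a = sigmoid b \<Longrightarrow> a = b"
proof -
  assume "sigmoid a = sigmoid b"
  then have "1 + exp (- a) = 1 + exp (- b)" unfolding sigmoid_def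
    by (metis divide_cancel_left one_neq_zero)
  then show "a = b" by simp
qed

lemma sigmoid_BT: "sigmoid (r x z - r x z') = BT r x z z'"
  unfolding sigmoid_def BT_def
  by (simp add: field_simps exp_diff exp_minus)

lemma BT_bounds: "0 < BT r x z z'" "BT r x z z' < 1"
proof -
  have g: "\<And>a b::real. 0 < a \<Longrightarrow> 0 < b \<Longrightarrow> 0 < a / (a + b) \<and> a / (a + b) < 1" by (simp add: field_simps)
  show "0 < BT r x z z'" "BT r x z z' < 1" unfolding BT_def using g[OF exp_gt_zero exp_gt_zero] by auto
qed

lemma uniform_pos: "0 < uniform_ref x (s :: 'y::finite \<times> 'z::finite)"
  unfolding uniform_ref_def by (simp add: card_gt_0_iff)

lemma dpo_pos:
  fixes q :: "'x \<Rightarrow> 'y::finite \<times> 'z::finite \<Rightarrow> real"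
  assumes "0 < q x s" "0 < q x s'"
  shows "dpo_term \<beta> q x s s' = - ln (sigmoid (\<beta> * (ln (q x s) - ln (q x s'))))"
proof -
  have c: "uniform_ref x s = uniform_ref x s'" unfolding uniform_ref_def by simp
  have A: "ln (q x s / uniform_ref x s) = ln (q x s) - ln (uniform_ref x s)"
    using assms uniform_pos[of x s] by (simp add: ln_div)
  have B: "ln (q x s' / uniform_ref x s') = ln (q x s') - ln (uniform_ref x s)"
    using assms uniform_pos[of x s] c by (simp add: ln_div)
  have "\<beta> * ln (q x s / uniform_ref x s) - \<beta> * ln (q x s' / uniform_ref x s')
     = \<beta> * (ln (q x s) - ln (q x s'))" unfolding A B by (simp add: algebra_simps)
  then show ?thesis unfolding dpo_term_def by simp
qed

lemma term_eq:
  fixes q :: "'x \<Rightarrow> 'y::finite \<times> 'z::finite \<Rightarrow> real"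
  assumes "0 < q x s" "0 < q x s'"
  shows "Psys r x s s' * dpo_term \<beta> q x s s' + (1 - Psys r x s s') * dpo_term \<beta> q x s' s
     = Tm (Psys r x s s') (sigmoid (\<beta> * (ln (q x s) - ln (q x s'))))"
proof -
  have "\<beta> * (ln (q x s') - ln (q x s)) = - (\<beta> * (ln (q x s) - ln (q x s')))" by (simp add: algebra_simps)
  then show ?thesis using dpo_pos[of q x s s' \<beta>, OF assms] dpo_pos[of q x s' s \<beta>, OF assms(2,1)]
    unfolding Tm_def by (simp add: sigmoid_neg)
qed

lemma triple_zero:
  fixes f :: "'a::finite \<Rightarrow> 'b::finite \<Rightarrow> 'c::finite \<Rightarrow> real"
  assumes "\<forall>x s s'. f x s s' \<ge> 0" "(\<Sum>x\<in>UNIV. \<Sum>s\<in>UNIV. \<Sum>s'\<in>UNIV. f x s s') \<le> 0"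
  shows "f x s s' = 0"
proof -
  have nn2: "\<And>x s. 0 \<le> (\<Sum>s'\<in>UNIV. f x s s')" using assms(1) by (simp add: sum_nonneg)
  have nn1: "\<And>x. 0 \<le> (\<Sum>s\<in>UNIV. \<Sum>s'\<in>UNIV. f x s s')" using nn2 by (simp add: sum_nonneg)
  have "(\<Sum>x\<in>UNIV. \<Sum>s\<in>UNIV. \<Sum>s'\<in>UNIV. f x s s') = 0"
    using assms(2) nn1 by (simp add: sum_nonneg antisym)
  then have "(\<Sum>s\<in>UNIV. \<Sum>s'\<in>UNIV. f x s s') = 0" using nn1 sum_nonneg_eq_0_iff[of UNIV "\<lambda>x. \<Sum>s\<in>UNIV. \<Sum>s'\<in>UNIV. f x s s'"] by auto
  then have "(\<Sum>s'\<in>UNIV. f x s s') = 0" using nn2 sum_nonneg_eq_0_iff[of UNIV "\<lambda>s. \<Sum>s'\<in>UNIV. f x s s'"] by auto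
  then show ?thesis using assms(1) sum_nonneg_eq_0_iff[of UNIV "\<lambda>s'. f x s s'"] by auto
qed

theorem theorem1:
  fixes r :: "'x::finite \<Rightarrow> 'z::finite \<Rightarrow> real"
    and \<beta> :: real
    and d :: "'x \<Rightarrow> 'y::finite \<times> 'z \<Rightarrow> 'y \<times> 'z \<Rightarrow> real"
    and p :: "'th \<Rightarrow> 'x \<Rightarrow> 'y \<times> 'z \<Rightarrow> real"
    and \<Theta> :: "'th set"
    and \<theta>s :: 'th
  assumes beta_pos: "\<beta> > 0"
    and d_pos: "\<forall>x s s'. d x s s' > 0"
    and d_sum: "(\<Sum>x\<in>UNIV. \<Sum>s\<in>UNIV. \<Sum>s'\<in>UNIV. d x s s') = 1"
    and family_dist: "\<forall>\<theta>\<in>\<Theta>. cond_dist (p \<theta>)"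
    and family_rich: "\<forall>q. cond_dist q \<and> (\<forall>x s. q x s > 0) \<longrightarrow> (\<exists>\<theta>\<in>\<Theta>. p \<theta> = q)"
    and opt_mem: "\<theta>s \<in> \<Theta>"
    and opt_min: "\<forall>\<theta>\<in>\<Theta>. L_direct \<beta> r d (p \<theta>s) \<le> L_direct \<beta> r d (p \<theta>)"
  shows "\<forall>x zw zl. BT r x zw zl =
           marginal (p \<theta>s) x zw powr \<beta> /
             (marginal (p \<theta>s) x zw powr \<beta> + marginal (p \<theta>s) x zl powr \<beta>)"
proof -
  define Z where "Z x = (\<Sum>s\<in>(UNIV::('y\<times>'z) set). exp (r x (snd s) / \<beta>))" for x
  define qo :: "'x \<Rightarrow> 'y \<times> 'z \<Rightarrow> real" where "qo x s = exp (r x (snd s) / \<beta>) / Z x" for x s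
  have Zpos: "0 < Z x" for x unfolding Z_def by (intro sum_pos) auto
  have qo_pos: "\<forall>x s. 0 < qo x s" unfolding qo_def using Zpos by auto
  have qo_dist: "cond_dist qo" unfolding cond_dist_def
  proof (intro conjI allI)
    fix x s show "0 \<le> qo x s" using qo_pos less_imp_le by blast
  next
    fix x show "(\<Sum>s\<in>UNIV. qo x s) = 1" unfolding qo_def using Zpos[of x]
      by (simp add: sum_divide_distrib[symmetric] Z_def)
  qed
  obtain \<theta>o where th: "\<theta>o \<in> \<Theta>" "p \<theta>o = qo" using family_rich qo_dist qo_pos by blast
  have qo_U: "sigmoid (\<beta> * (ln (qo x s) - ln (qo x s'))) = Psys r x s s'" for x s s'
  proof -
    have "\<beta> * (ln (qo x s) - ln (qo x s')) = r x (snd s) - r x (snd s')"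
      unfolding qo_def using Zpos[of x] beta_pos by (simp add: ln_div algebra_simps)
    then show ?thesis unfolding Psys_def by (simp add: sigmoid_BT)
  qed
  define H where "H = (\<Sum>x\<in>UNIV. \<Sum>s\<in>UNIV. \<Sum>s'\<in>UNIV. d x s s' * Tm (Psys r x s s') (Psys r x s s'))"
  have Lo: "L_direct \<beta> r d qo = ereal H"
  proof -
    have p: "\<And>x s. 0 < qo x s" using qo_pos by blast
    show ?thesis unfolding L_direct_def H_def if_P[OF qo_pos]
      by (intro arg_cong[where f=ereal] sum.cong refl, simp add: term_eq[of qo, OF p p] qo_U)
  qed
  let ?q = "p \<theta>s"
  have le: "L_direct \<beta> r d ?q \<le> ereal H" using opt_min th Lo by metis
  have qpos: "\<forall>x s. 0 < ?q x s"
  proof (rule ccontr)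
    assume "\<not> ?thesis"
    then have "L_direct \<beta> r d ?q = \<infinity>" unfolding L_direct_def by auto
    then show False using le by simp
  qed
  define U where "U x s s' = sigmoid (\<beta> * (ln (?q x s) - ln (?q x s')))" for x s s'
  have Lq: "L_direct \<beta> r d ?q = ereal (\<Sum>x\<in>UNIV. \<Sum>s\<in>UNIV. \<Sum>s'\<in>UNIV. d x s s' * Tm (Psys r x s s') (U x s s'))"
  proof -
    have p: "\<And>x s. 0 < ?q x s" using qpos by blast
    show ?thesis unfolding L_direct_def U_def if_P[OF qpos]
      by (intro arg_cong[where f=ereal] sum.cong refl, simp add: term_eq[of "p \<theta>s", OF p p])
  qed
  define f where "f x s s' = d x s s' * (Tm (Psys r x s s') (U x s s') - Tm (Psys r x s s') (Psys r x s s'))" for x s s'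
  have Pb: "0 < Psys r x s s'" "Psys r x s s' < 1" for x s s' unfolding Psys_def by (rule BT_bounds(1), rule BT_bounds(2))
  have Ub: "0 < U x s s'" "U x s s' < 1" for x s s' unfolding U_def by (rule sigmoid_bounds(1), rule sigmoid_bounds(2))
  have fnn: "\<forall>x s s'. f x s s' \<ge> 0"
  proof (intro allI)
    fix x s s'
    have "Tm (Psys r x s s') (Psys r x s s') \<le> Tm (Psys r x s s') (U x s s')"
      using gibbs_le[OF Pb(1)[of x s s'] Pb(2)[of x s s'] Ub(1)[of x s s'] Ub(2)[of x s s']] .
    moreover have "0 \<le> d x s s'" using d_pos less_imp_le by blast
    ultimately show "f x s s' \<ge> 0" unfolding f_def by simp
  qed
  have "(\<Sum>x\<in>UNIV. \<Sum>s\<in>UNIV. \<Sum>s'\<in>UNIV. d x s s' * Tm (Psys r x s s') (U x s s')) \<le> H"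
    using le Lq by simp
  then have "(\<Sum>x\<in>UNIV. \<Sum>s\<in>UNIV. \<Sum>s'\<in>UNIV. f x s s') \<le> 0"
    unfolding f_def H_def by (simp add: right_diff_distrib sum_subtractf)
  then have f0: "f x s s' = 0" for x s s' using triple_zero fnn by blast
  have Ueq: "U x s s' = Psys r x s s'" for x s s'
  proof -
    have "Tm (Psys r x s s') (U x s s') \<le> Tm (Psys r x s s') (Psys r x s s')"
      using f0[of x s s'] d_pos unfolding f_def by (metis mult_eq_0_iff order_refl order_less_irrefl diff_eq_diff_eq diff_self)
    then show ?thesis using gibbs_eq[OF Pb(1)[of x s s'] Pb(2)[of x s s'] Ub(1)[of x s s'] Ub(2)[of x s s']] by blast
  qed
  have key: "\<beta> * (ln (?q x s) - ln (?q x s')) = r x (snd s) - r x (snd s')" for x s s'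
    using Ueq[of x s s'] unfolding U_def Psys_def by (metis sigmoid_BT sigmoid_inj)
  define s0 :: "'y \<times> 'z" where "s0 = undefined"
  define K where "K x = exp (ln (?q x s0) - r x (snd s0) / \<beta>)" for x
  have qform: "?q x (y, z) = K x * exp (r x z / \<beta>)" for x y z
  proof -
    have "ln (?q x (y,z)) = ln (?q x s0) - r x (snd s0) / \<beta> + r x z / \<beta>"
      using key[of x "(y,z)" s0] beta_pos by (simp add: field_simps)
    then have "?q x (y,z) = exp (ln (?q x s0) - r x (snd s0) / \<beta> + r x z / \<beta>)"
      using qpos by (metis exp_ln)
    then show ?thesis unfolding K_def by (simp add: exp_add)
  qed
  define C where "C x = real (card (UNIV :: 'y set)) * K x" for x
  have Cpos: "0 < C x" for x unfolding C_def K_def by (simp add: card_gt_0_iff)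
  have marg: "marginal ?q x z = C x * exp (r x z / \<beta>)" for x z
    unfolding marginal_def C_def by (simp add: qform)
  have mp: "marginal ?q x z powr \<beta> = C x powr \<beta> * exp (r x z)" for x z
    using marg beta_pos Cpos by (simp add: powr_mult exp_powr_real)
  show ?thesis
  proof (intro allI)
    fix x zw zl
    have cp: "0 < C x powr \<beta>" using Cpos[of x] by simp
    show "BT r x zw zl = marginal ?q x zw powr \<beta> / (marginal ?q x zw powr \<beta> + marginal ?q x zl powr \<beta>)"
      unfolding mp BT_def using cp
      by (simp add: distrib_left[symmetric] del: distrib_left)
  qed
qed

end
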